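(* Fix integers $n\ge 1$ and degrees $m=(m_1,\ldots,m_{n+1})$ with each $m_j\ge 1$, and fix a $p$-norm. There exist positive scalars $c_m$ and $c_m'$, depending only on the degrees (and $n$) and on the choice of norm, such that the following holds. Let $f:[0,1]^{n+1}\to\mathbb{R}^n$ be a polynomial of degrees $m$ that is nondegenerate, i.e., there is no $x\in[0,1]^{n+1}$ with $f(x)=0$ and $\operatorname{rank}(f'(x))<n$. Then: (1) every polynomial $\tilde f$ of degrees $m$ satisfying $$\frac{\|\tilde f-f\|}{\|f\|}\le \frac{c_m}{\kappa(f)}$$ is nondegenerate; (2) conversely, there exists a degenerate polynomial $\hat f$ of degrees $m$ such that $$\frac{\|\hat f-f\|}{\|f\|}\le \frac{c_m'}{\kappa(f)}.$$
   Context: A polynomial $g:[0,1]^{n+1}\to\mathbb{R}^n$ of degrees $m=(m_1,\ldots,m_{n+1})$ is written in tensor-product Bernstein–Bézier form $g(x)=\sum_{i_1=0}^{m_1}\cdots\sum_{i_{n+1}=0}^{m_{n+1}} b_{i_1,\ldots,i_{n+1}} Z_{i_1,m_1}(x_1)\cdots Z_{i_{n+1},m_{n+1}}(x_{n+1})$ with control points $b_{i_1,\ldots,i_{n+1}}\in\mathbb{R}^n$, where $Z_{i,m}(t)=\frac{m!}{i!(m-i)!}(1-t)^{m-i}t^i$. The norm $\|g\|$ of such a polynomial is the maximum of the chosen $p$-norm of its control points. Matrix norms are the induced operator norms. For an $n\times(n+1)$ matrix $A$ of rank $n$, $A^\dagger=A^T(AA^T)^{-1}$. The condition number is $$\kappa(f)=\|f\|\cdot\max_{x\in[0,1]^{n+1}}\min\left\{\frac{1}{\|f(x)\|},\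 \|f'(x)^\dagger\|\right\},$$ where $1/\|f(x)\|$ is taken to be $\infty$ if $f(x)=0$, and $\|f'(x)^\dagger\|$ is taken to be $\infty$ if $\operatorname{rank}(f'(x))<n$. A polynomial is degenerate if there is $x\in[0,1]^{n+1}$ with $f(x)=0$ and $\operatorname{rank}(f'(x))<n$. *)

theory Defs
  imports "HOL-Analysis.Analysis" "HOL-Library.Extended_Real"
begin

text \<open>Conventions. R^n is real^'n for a finite type 'n (n = CARD('n) >= 1);
  R^(n+1) is real^('n option) (CARD('n option) = n + 1).
  A polynomial of degrees m is given by its array of control points
  b :: ('n option => nat) => real^'n, read only on the multi-indices
  i with i j <= m j for all j.  The p-norm parameter p is an extended
  real with 1 <= p (p = infinity allowed).\<close>

definition pnorm :: "ereal \<Rightarrow> real^'k \<Rightarrow> real" where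
  "pnorm p v = (if p = \<infinity> then Max (range (\<lambda>j. \<bar>v $ j\<bar>))
                else (\<Sum>j\<in>UNIV. \<bar>v $ j\<bar> powr real_of_ereal p) powr (1 / real_of_ereal p))"

definition bern :: "nat \<Rightarrow> nat \<Rightarrow> real \<Rightarrow> real" where
  "bern i m t = real (m choose i) * (1 - t) ^ (m - i) * t ^ i"

definition multi_idx :: "('j \<Rightarrow> nat) \<Rightarrow> ('j \<Rightarrow> nat) set" where
  "multi_idx m = {i. \<forall>j. i j \<le> m j}"

text \<open>Evaluation of the tensor-product Bernstein--Bezier polynomial.\<close>
definition bb_eval :: "('n option \<Rightarrow> nat) \<Rightarrow> (('n option \<Rightarrow> nat) \<Rightarrow> real^'n)
                        \<Rightarrow> real^('n::finite option) \<Rightarrow> real^'n" where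
  "bb_eval m b x = (\<Sum>i\<in>multi_idx m. (\<Prod>j\<in>UNIV. bern (i j) (m j) (x $ j)) *\<^sub>R b i)"

text \<open>Norm of a polynomial: maximum of the p-norms of its control points.\<close>
definition bb_norm :: "ereal \<Rightarrow> ('n option \<Rightarrow> nat) \<Rightarrow> (('n option \<Rightarrow> nat) \<Rightarrow> real^'n)
                        \<Rightarrow> real" where
  "bb_norm p m b = Max ((\<lambda>i. pnorm p (b i)) ` multi_idx (m :: 'n::finite option \<Rightarrow> nat))"

definition unit_cube :: "(real^'k) set" where
  "unit_cube = {x. \<forall>j. 0 \<le> x $ j \<and> x $ j \<le> 1}"

text \<open>Jacobian f'(x), an n x (n+1) matrix: entry (k,j) is the partial
  derivative of component k with respect to x_j.\<close>
definition bb_jac :: "('n option \<Rightarrow> nat) \<Rightarrow> (('n option \<Rightarrow> nat) \<Rightarrow> real^'n)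
                        \<Rightarrow> real^('n::finite option) \<Rightarrow> real^('n option)^'n" where
  "bb_jac m b x = (\<chi> k j. deriv (\<lambda>t. bb_eval m b (\<chi> l. if l = j then t else x $ l) $ k) (x $ j))"

text \<open>Moore--Penrose pseudoinverse of a full-row-rank matrix.\<close>
definition pinv :: "real^'c^'r \<Rightarrow> real^'r^'c" where
  "pinv A = transpose A ** matrix_inv (A ** transpose A)"

text \<open>Induced operator norm w.r.t. the p-norms.\<close>
definition opnorm :: "ereal \<Rightarrow> real^'c^'r \<Rightarrow> real" where
  "opnorm p M = (SUP y\<in>{y. y \<noteq> 0}. pnorm p (M *v y) / pnorm p y)"

definition degenerate :: "('n option \<Rightarrow> nat) \<Rightarrow> (('n option \<Rightarrow> nat) \<Rightarrow> real^'n) \<Rightarrow> bool" where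
  "degenerate m b \<longleftrightarrow> (\<exists>x\<in>unit_cube. bb_eval m b x = 0 \<and>
                         rank (bb_jac m b x) < CARD('n::finite))"

text \<open>Condition number (as an extended real).\<close>
definition kappa :: "ereal \<Rightarrow> ('n option \<Rightarrow> nat) \<Rightarrow> (('n option \<Rightarrow> nat) \<Rightarrow> real^'n) \<Rightarrow> ereal" where
  "kappa p m b = ereal (bb_norm p m b) *
     (SUP x\<in>unit_cube.
        min (if bb_eval m b x = 0 then \<infinity> else ereal (1 / pnorm p (bb_eval m b x)))
            (if rank (bb_jac m b x) < CARD('n::finite) then \<infinity>
             else ereal (opnorm p (pinv (bb_jac m b x)))))"

end

theory Submission
  imports Defs
begin

lemma real_of_ereal_ge1: "p \<ge> 1 \<Longrightarrow> p \<noteq> \<infinity> \<Longrightarrow> real_of_ereal p \<ge> 1"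
  by (cases p) auto

lemma pnorm_ge_comp:
  fixes v :: "real^'k"
  assumes "p \<ge> 1" shows "\<bar>v $ j\<bar> \<le> pnorm p v"
proof (cases "p = \<infinity>")
  case True then show ?thesis unfolding pnorm_def by (auto intro: Max_ge)
next
  case False
  define q where "q = real_of_ereal p"
  have q: "q \<ge> 1" using real_of_ereal_ge1[OF assms False] q_def by simp
  have "\<bar>v $ j\<bar> powr q \<le> (\<Sum>l\<in>UNIV. \<bar>v $ l\<bar> powr q)"
    by (rule member_le_sum) auto
  hence "(\<bar>v $ j\<bar> powr q) powr (1/q) \<le> (\<Sum>l\<in>UNIV. \<bar>v $ l\<bar> powr q) powr (1/q)"
    by (intro powr_mono2) (use q in auto)
  moreover have "(\<bar>v $ j\<bar> powr q) powr (1/q) = \<bar>v $ j\<bar>"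
    using q by (simp add: powr_powr)
  ultimately show ?thesis using False unfolding pnorm_def q_def by simp
qed

lemma pnorm_le_bound:
  fixes v :: "real^'k"
  assumes "p \<ge> 1" and M: "\<And>j. \<bar>v $ j\<bar> \<le> M"
  shows "pnorm p v \<le> real CARD('k) * M"
proof -
  have M0: "M \<ge> 0" using M[of undefined] by linarith
  have C1: "real CARD('k) \<ge> 1" by simp
  show ?thesis
  proof (cases "p = \<infinity>")
    case True
    have "Max (range (\<lambda>j. \<bar>v $ j\<bar>)) \<le> M" using M by (auto intro!: Max.boundedI)
    also have "M \<le> real CARD('k) * M" using C1 M0 by (simp add: mult_le_cancel_right1)
    finally show ?thesis using True unfolding pnorm_def by simp
  next
    case False
    define q where "q = real_of_ereal p"
    have q: "q \<ge> 1" using real_of_ereal_ge1[OF assms(1) False] q_def by simp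
    have "(\<Sum>l\<in>UNIV. \<bar>v $ l\<bar> powr q) \<le> (\<Sum>l\<in>(UNIV::'k set). M powr q)"
      by (intro sum_mono powr_mono2) (use q M in auto)
    also have "\<dots> = real CARD('k) * M powr q" by simp
    finally have s: "(\<Sum>l\<in>UNIV. \<bar>v $ l\<bar> powr q) \<le> real CARD('k) * M powr q" .
    hence "(\<Sum>l\<in>UNIV. \<bar>v $ l\<bar> powr q) powr (1/q) \<le> (real CARD('k) * M powr q) powr (1/q)"
      by (intro powr_mono2) (use q in \<open>auto intro: sum_nonneg\<close>)
    also have "\<dots> = real CARD('k) powr (1/q) * M"
      using q M0 by (simp add: powr_mult powr_powr)
    also have "\<dots> \<le> real CARD('k) * M"
    proof (intro mult_right_mono M0)
      have "real CARD('k) powr (1/q) \<le> real CARD('k) powr 1"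
        by (intro powr_mono) (use q C1 in auto)
      thus "real CARD('k) powr (1/q) \<le> real CARD('k)" by simp
    qed
    finally show ?thesis using False unfolding pnorm_def q_def by simp
  qed
qed

lemma pnorm_le_norm:
  fixes v :: "real^'k"
  assumes "p \<ge> 1" shows "pnorm p v \<le> real CARD('k) * norm v"
  by (rule pnorm_le_bound[OF assms]) (simp add: component_le_norm_cart)

lemma norm_le_pnorm:
  fixes v :: "real^'k"
  assumes "p \<ge> 1" shows "norm v \<le> real CARD('k) * pnorm p v"
proof -
  have "norm v \<le> (\<Sum>j\<in>UNIV. \<bar>v $ j\<bar>)" by (rule norm_le_l1_cart)
  also have "\<dots> \<le> (\<Sum>j\<in>(UNIV::'k set). pnorm p v)" by (intro sum_mono pnorm_ge_comp assms)
  finally show ?thesis by simp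
qed

lemma pnorm_nonneg: fixes v :: "real^'k" assumes "p \<ge> 1" shows "pnorm p v \<ge> 0"
  using pnorm_ge_comp[OF assms, of v undefined] by linarith

lemma pnorm_pos: fixes v :: "real^'k" assumes "p \<ge> 1" "v \<noteq> 0" shows "pnorm p v > 0"
proof -
  have "norm v > 0" using assms by simp
  moreover have "norm v \<le> real CARD('k) * pnorm p v" by (rule norm_le_pnorm[OF assms(1)])
  ultimately have "0 < real CARD('k) * pnorm p v" by linarith
  thus ?thesis by (simp add: zero_less_mult_iff)
qed

lemma pnorm_zero: assumes "p \<ge> 1" shows "pnorm p (0::real^'k) = 0"
proof -
  have "pnorm p (0::real^'k) \<le> real CARD('k) * 0" by (rule pnorm_le_bound[OF assms]) simp
  thus ?thesis using pnorm_nonneg[OF assms, of "0::real^'k"] by linarith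
qed

definition dbern :: "nat \<Rightarrow> nat \<Rightarrow> real \<Rightarrow> real" where
  "dbern i m t = real (m choose i) * (real i * (1-t)^(m-i) * t^(i-1) - real (m-i) * (1-t)^(m-i-1) * t^i)"

lemma bern_deriv: "(bern i m has_real_derivative dbern i m t) (at t)"
  unfolding bern_def dbern_def by (auto intro!: derivative_eq_intros simp: algebra_simps)

definition upd :: "real^'k \<Rightarrow> 'k \<Rightarrow> real \<Rightarrow> real^'k" where
  "upd x j t = (\<chi> l. if l = j then t else x $ l)"

definition BB :: "('j::finite \<Rightarrow> nat) \<Rightarrow> ('j \<Rightarrow> nat) \<Rightarrow> real^'j \<Rightarrow> real" where
  "BB m i x = (\<Prod>j\<in>UNIV. bern (i j) (m j) (x $ j))"

definition dBB :: "('j::finite \<Rightarrow> nat) \<Rightarrow> ('j \<Rightarrow> nat) \<Rightarrow> real^'j \<Rightarrow> 'j \<Rightarrow> real" where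
  "dBB m i x j = dbern (i j) (m j) (x $ j) * (\<Prod>l\<in>UNIV-{j}. bern (i l) (m l) (x $ l))"

lemma multi_idx_PiE: "multi_idx m = PiE UNIV (\<lambda>j. {..m j})"
  unfolding multi_idx_def by (auto simp: PiE_UNIV_domain)

lemma finite_multi_idx: "finite (multi_idx (m::'j::finite \<Rightarrow> nat))"
  unfolding multi_idx_PiE by (intro finite_PiE) auto

lemma multi_idx_ne: "(\<lambda>_. 0) \<in> multi_idx m"
  unfolding multi_idx_def by auto

lemma bb_eval_comp: "bb_eval m b x $ k = (\<Sum>i\<in>multi_idx m. BB m i x * b i $ k)"
  unfolding bb_eval_def BB_def by (simp add: sum_component)

lemma upd_nth: "upd x j t $ l = (if l = j then t else x $ l)"
  unfolding upd_def by simp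

lemma upd_self: "upd x j (x $ j) = x"
  unfolding upd_def by (simp add: vec_eq_iff)

lemma BB_upd: "BB m i (upd x j t) = bern (i j) (m j) t * (\<Prod>l\<in>UNIV-{j}. bern (i l) (m l) (x $ l))"
proof -
  have "BB m i (upd x j t) = bern (i j) (m j) (upd x j t $ j) * (\<Prod>l\<in>UNIV-{j}. bern (i l) (m l) (upd x j t $ l))"
    unfolding BB_def by (rule prod.remove) auto
  also have "(\<Prod>l\<in>UNIV-{j}. bern (i l) (m l) (upd x j t $ l)) = (\<Prod>l\<in>UNIV-{j}. bern (i l) (m l) (x $ l))"
    by (rule prod.cong) (auto simp: upd_nth)
  finally show ?thesis by (simp add: upd_nth)
qed

lemma dBB_upd: "dBB m i (upd x j t) j = dbern (i j) (m j) t * (\<Prod>l\<in>UNIV-{j}. bern (i l) (m l) (x $ l))"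
  unfolding dBB_def by (auto simp: upd_nth intro!: prod.cong)

lemma partial_deriv:
  "((\<lambda>t. bb_eval m b (upd x j t) $ k) has_real_derivative
     (\<Sum>i\<in>multi_idx m. dBB m i (upd x j t) j * b i $ k)) (at t)"
  unfolding bb_eval_comp BB_upd dBB_upd
  by (auto intro!: derivative_eq_intros bern_deriv)

lemma bb_jac_formula: "bb_jac m b x $ k $ j = (\<Sum>i\<in>multi_idx m. dBB m i x j * b i $ k)"
proof -
  have "bb_jac m b x $ k $ j = deriv (\<lambda>t. bb_eval m b (upd x j t) $ k) (x $ j)"
    unfolding bb_jac_def upd_def by simp
  also have "\<dots> = (\<Sum>i\<in>multi_idx m. dBB m i (upd x j (x $ j)) j * b i $ k)"
    by (rule DERIV_imp_deriv[OF partial_deriv])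
  finally show ?thesis by (simp add: upd_self)
qed

lemma bern_sum: "(\<Sum>k\<le>m. bern k m t) = 1"
proof -
  have "(t + (1 - t)) ^ m = (\<Sum>k\<le>m. of_nat (m choose k) * t ^ k * (1 - t) ^ (m - k))"
    by (rule binomial_ring)
  thus ?thesis unfolding bern_def by (simp add: algebra_simps)
qed

lemma bern_sum_k: "(\<Sum>k\<le>m. real k * bern k m t) = real m * t"
proof (cases m)
  case 0 thus ?thesis by simp
next
  case (Suc n)
  have "(\<Sum>k\<le>Suc n. real k * bern k (Suc n) t) = (\<Sum>k\<le>n. real (Suc k) * bern (Suc k) (Suc n) t)"
    by (subst sum.atMost_Suc_shift) simp
  also have "\<dots> = (\<Sum>k\<le>n. real (Suc n) * t * bern k n t)"
  proof (rule sum.cong)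
    fix k assume "k \<in> {..n}"
    have e: "real (Suc k) * real (Suc n choose Suc k) = real (Suc n) * real (n choose k)"
      using Suc_times_binomial[of k n] by (metis of_nat_mult)
    show "real (Suc k) * bern (Suc k) (Suc n) t = real (Suc n) * t * bern k n t"
    proof -
      have "real (Suc k) * bern (Suc k) (Suc n) t = (real (Suc k) * real (Suc n choose Suc k)) * (1 - t) ^ (n - k) * (t * t ^ k)"
        unfolding bern_def by simp
      also have "\<dots> = (real (Suc n) * real (n choose k)) * (1 - t) ^ (n - k) * (t * t ^ k)" by (simp only: e)
      also have "\<dots> = real (Suc n) * t * bern k n t" unfolding bern_def by simp
      finally show ?thesis .
    qed
  qed simp
  also have "\<dots> = real (Suc n) * t" by (simp add: sum_distrib_left[symmetric] bern_sum)
  finally show ?thesis using Suc by simp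
qed

lemma BB_sum: "(\<Sum>i\<in>multi_idx m. BB m i x) = 1"
proof -
  have "(\<Prod>l\<in>UNIV. \<Sum>k\<in>{..m l}. bern k (m l) (x $ l)) = (\<Sum>g\<in>PiE UNIV (\<lambda>l. {..m l}). \<Prod>l\<in>UNIV. bern (g l) (m l) (x $ l))"
    by (rule prod_sum_PiE) auto
  thus ?thesis unfolding multi_idx_PiE BB_def by (simp add: bern_sum)
qed

lemma BB_sum_k: "(\<Sum>i\<in>multi_idx m. real (i j) * BB m i x) = real (m j) * x $ j"
proof -
  define f where "f l k = (if l = j then real k else 1) * bern k (m l) (x $ l)" for l k
  have "(\<Prod>l\<in>UNIV. \<Sum>k\<in>{..m l}. f l k) = (\<Sum>g\<in>PiE UNIV (\<lambda>l. {..m l}). \<Prod>l\<in>UNIV. f l (g l))"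
    by (rule prod_sum_PiE) auto
  moreover have "(\<Prod>l\<in>UNIV. \<Sum>k\<in>{..m l}. f l k) = (\<Prod>l\<in>UNIV. if l = j then real (m j) * x $ j else 1)"
    by (rule prod.cong) (auto simp: f_def bern_sum bern_sum_k)
  moreover have "(\<Prod>l\<in>UNIV. f l (g l)) = real (g j) * BB m g x" for g
  proof -
    have "(\<Prod>l\<in>UNIV. f l (g l)) = (\<Prod>l\<in>UNIV. (if l = j then real (g l) else 1)) * BB m g x"
      unfolding f_def BB_def by (rule prod.distrib)
    also have "(\<Prod>l\<in>UNIV. (if l = j then real (g l) else 1)) = real (g j)"
      by (subst prod.delta) auto
    finally show ?thesis .
  qed
  ultimately show ?thesis unfolding multi_idx_PiE by (simp add: prod.delta)
qed

lemma bern_nonneg: "0 \<le> t \<Longrightarrow> t \<le> 1 \<Longrightarrow> 0 \<le> bern i m t"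
  unfolding bern_def by simp

lemma bern_le: assumes "0 \<le> t" "t \<le> 1" shows "\<bar>bern i m t\<bar> \<le> real (m choose i)"
proof -
  have "(1 - t) ^ (m - i) * t ^ i \<le> 1" using assms by (intro mult_le_one power_le_one) auto
  hence "real (m choose i) * ((1 - t) ^ (m - i) * t ^ i) \<le> real (m choose i) * 1"
    by (intro mult_left_mono) auto
  thus ?thesis using bern_nonneg[OF assms] unfolding bern_def by (simp add: mult.assoc)
qed

lemma dbern_le: assumes "0 \<le> t" "t \<le> 1" "i \<le> m"
  shows "\<bar>dbern i m t\<bar> \<le> real (m choose i) * real m"
proof -
  have a1: "(1-t)^(m-i) * t^(i-1) \<le> 1" using assms by (intro mult_le_one power_le_one) auto
  have b1: "(1-t)^(m-i-1) * t^i \<le> 1" using assms by (intro mult_le_one power_le_one) auto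
  have a: "0 \<le> real i * (1-t)^(m-i) * t^(i-1)" "real i * (1-t)^(m-i) * t^(i-1) \<le> real i"
    using assms mult_left_le[OF a1, of "real i"] by (auto simp: mult.assoc)
  have b: "0 \<le> real (m-i) * (1-t)^(m-i-1) * t^i" "real (m-i) * (1-t)^(m-i-1) * t^i \<le> real (m-i)"
    using assms mult_left_le[OF b1, of "real (m-i)"] by (auto simp: mult.assoc)
  have "\<bar>real i * (1-t)^(m-i) * t^(i-1) - real (m-i) * (1-t)^(m-i-1) * t^i\<bar> \<le> real i + real (m - i)"
    using a b by linarith
  also have "\<dots> = real m" using assms by simp
  finally have "\<bar>real i * (1-t)^(m-i) * t^(i-1) - real (m-i) * (1-t)^(m-i-1) * t^i\<bar> \<le> real m" .
  thus ?thesis unfolding dbern_def abs_mult abs_of_nat by (intro mult_left_mono) auto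
qed

definition W0 :: "('j::finite \<Rightarrow> nat) \<Rightarrow> ('j \<Rightarrow> nat) \<Rightarrow> real" where
  "W0 m i = (\<Prod>l\<in>UNIV. real (m l choose i l))"
definition W1 :: "('j::finite \<Rightarrow> nat) \<Rightarrow> ('j \<Rightarrow> nat) \<Rightarrow> real" where
  "W1 m i = (\<Prod>l\<in>UNIV. real (m l choose i l) * (1 + real (m l)))"
definition CB :: "('j::finite \<Rightarrow> nat) \<Rightarrow> real" where
  "CB m = (\<Sum>i\<in>multi_idx m. W0 m i)"
definition CD :: "('j::finite \<Rightarrow> nat) \<Rightarrow> real" where
  "CD m = (\<Sum>i\<in>multi_idx m. W1 m i)"

lemma W0_nonneg: "W0 m i \<ge> 0" unfolding W0_def by (auto intro: prod_nonneg)
lemma W1_nonneg: "W1 m i \<ge> 0" unfolding W1_def by (auto intro: prod_nonneg)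
lemma CB_nonneg: "CB m \<ge> 0" unfolding CB_def by (auto intro: sum_nonneg W0_nonneg)
lemma CD_nonneg: "CD m \<ge> 0" unfolding CD_def by (auto intro: sum_nonneg W1_nonneg)

lemma unit_cube_iff: "x \<in> unit_cube \<longleftrightarrow> (\<forall>j. 0 \<le> x $ j \<and> x $ j \<le> 1)"
  unfolding unit_cube_def by simp

lemma BB_le: assumes "x \<in> unit_cube" shows "\<bar>BB m i x\<bar> \<le> W0 m i"
  unfolding BB_def W0_def abs_prod using assms
  by (intro prod_mono) (auto simp: unit_cube_iff intro: bern_le)

lemma dBB_le: assumes "x \<in> unit_cube" "i \<in> multi_idx m" shows "\<bar>dBB m i x j\<bar> \<le> W1 m i"
proof -
  have W1: "W1 m i = (real (m j choose i j) * (1 + real (m j))) *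
     (\<Prod>l\<in>UNIV-{j}. real (m l choose i l) * (1 + real (m l)))"
    unfolding W1_def by (rule prod.remove) auto
  have "\<bar>dbern (i j) (m j) (x $ j)\<bar> \<le> real (m j choose i j) * (1 + real (m j))"
  proof -
    have "\<bar>dbern (i j) (m j) (x $ j)\<bar> \<le> real (m j choose i j) * real (m j)"
      using assms by (intro dbern_le) (auto simp: unit_cube_iff multi_idx_def)
    also have "\<dots> \<le> real (m j choose i j) * (1 + real (m j))" by (intro mult_left_mono) auto
    finally show ?thesis .
  qed
  moreover have "\<bar>\<Prod>l\<in>UNIV-{j}. bern (i l) (m l) (x $ l)\<bar> \<le> (\<Prod>l\<in>UNIV-{j}. real (m l choose i l) * (1 + real (m l)))"
    unfolding abs_prod
  proof (intro prod_mono conjI)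
    fix l
    have "\<bar>bern (i l) (m l) (x $ l)\<bar> \<le> real (m l choose i l)"
      using assms by (intro bern_le) (auto simp: unit_cube_iff)
    also have "\<dots> \<le> real (m l choose i l) * (1 + real (m l))" by (simp add: distrib_left)
    finally show "\<bar>bern (i l) (m l) (x $ l)\<bar> \<le> real (m l choose i l) * (1 + real (m l))" .
  qed auto
  ultimately show ?thesis unfolding dBB_def W1 abs_mult
    by (intro mult_mono) auto
qed

lemma bb_eval_norm_le:
  assumes "x \<in> unit_cube" "\<And>i. i \<in> multi_idx m \<Longrightarrow> norm (b i) \<le> E"
  shows "norm (bb_eval m b x) \<le> CB m * E"
proof -
  have "norm (bb_eval m b x) \<le> (\<Sum>i\<in>multi_idx m. norm (BB m i x *\<^sub>R b i))"
    unfolding bb_eval_def BB_def by (rule norm_sum)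
  also have "\<dots> \<le> (\<Sum>i\<in>multi_idx m. W0 m i * E)"
  proof (rule sum_mono)
    fix i assume i: "i \<in> multi_idx m"
    have "\<bar>BB m i x\<bar> * norm (b i) \<le> W0 m i * norm (b i)"
      by (intro mult_right_mono BB_le assms) auto
    also have "\<dots> \<le> W0 m i * E" by (intro mult_left_mono assms i W0_nonneg)
    finally show "norm (BB m i x *\<^sub>R b i) \<le> W0 m i * E" by simp
  qed
  also have "\<dots> = CB m * E" unfolding CB_def by (simp add: sum_distrib_right)
  finally show ?thesis .
qed

lemma bb_jac_le:
  assumes "x \<in> unit_cube" "\<And>i. i \<in> multi_idx m \<Longrightarrow> norm (b i) \<le> E"
  shows "\<bar>bb_jac m b x $ k $ j\<bar> \<le> CD m * E"
proof -
  have "\<bar>bb_jac m b x $ k $ j\<bar> \<le> (\<Sum>i\<in>multi_idx m. \<bar>dBB m i x j * b i $ k\<bar>)"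
    unfolding bb_jac_formula by (rule sum_abs)
  also have "\<dots> \<le> (\<Sum>i\<in>multi_idx m. W1 m i * E)"
  proof (rule sum_mono)
    fix i assume i: "i \<in> multi_idx m"
    have "\<bar>dBB m i x j\<bar> * \<bar>b i $ k\<bar> \<le> W1 m i * \<bar>b i $ k\<bar>"
      by (intro mult_right_mono dBB_le assms i) auto
    also have "\<dots> \<le> W1 m i * E"
      by (intro mult_left_mono W1_nonneg order.trans[OF component_le_norm_cart assms(2)] i)
    finally show "\<bar>dBB m i x j * b i $ k\<bar> \<le> W1 m i * E" by (simp add: abs_mult)
  qed
  also have "\<dots> = CD m * E" unfolding CD_def by (simp add: sum_distrib_right)
  finally show ?thesis .
qed

lemma bb_eval_diff: "bb_eval m (\<lambda>i. b i - b' i) x = bb_eval m b x - bb_eval m b' x"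
  unfolding bb_eval_def by (simp add: scaleR_diff_right sum_subtractf)

lemma bb_jac_diff: "bb_jac m (\<lambda>i. b i - b' i) x = bb_jac m b x - bb_jac m b' x"
  by (simp add: vec_eq_iff bb_jac_formula algebra_simps sum_subtractf)

lemma matrix_bound:
  fixes M :: "real^'c^'r"
  assumes "\<And>k j. \<bar>M $ k $ j\<bar> \<le> e"
  shows "norm (M *v y) \<le> real CARD('r) * real CARD('c) * e * norm y"
proof -
  have "norm (M *v y) \<le> (\<Sum>k\<in>UNIV. \<bar>(M *v y) $ k\<bar>)" by (rule norm_le_l1_cart)
  also have "\<dots> \<le> (\<Sum>k\<in>(UNIV::'r set). \<Sum>j\<in>(UNIV::'c set). e * norm y)"
  proof (rule sum_mono)
    fix k
    have "\<bar>(M *v y) $ k\<bar> \<le> (\<Sum>j\<in>UNIV. \<bar>M $ k $ j * y $ j\<bar>)"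
      unfolding matrix_vector_mult_def by (simp add: sum_abs)
    also have "\<dots> \<le> (\<Sum>j\<in>(UNIV::'c set). e * norm y)"
      unfolding abs_mult
      by (intro sum_mono mult_mono assms component_le_norm_cart) (auto intro: order.trans[OF abs_ge_zero assms])
    finally show "\<bar>(M *v y) $ k\<bar> \<le> (\<Sum>j\<in>(UNIV::'c set). e * norm y)" .
  qed
  also have "\<dots> = real CARD('r) * real CARD('c) * e * norm y" by simp
  finally show ?thesis .
qed

lemma dot_transpose: "w \<bullet> (A *v z) = (transpose A *v w) \<bullet> (z::real^'c)"
  by (simp add: dot_lmul_matrix)

lemma exists_nonzero: "\<exists>y::real^'c. y \<noteq> 0"
  by (rule exI[of _ "axis undefined 1"]) (simp add: axis_eq_0_iff)

lemma matrix_exists_bound: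
  fixes M :: "real^'c^'r"
  shows "\<exists>K. \<forall>y. norm (M *v y) \<le> K * norm y"
proof -
  define e where "e = (\<Sum>k\<in>UNIV. \<Sum>j\<in>UNIV. \<bar>M $ k $ j\<bar>)"
  have "\<bar>M $ k $ j\<bar> \<le> e" for k j
  proof -
    have "\<bar>M $ k $ j\<bar> \<le> (\<Sum>j\<in>UNIV. \<bar>M $ k $ j\<bar>)" by (rule member_le_sum) auto
    also have "\<dots> \<le> e" unfolding e_def by (rule member_le_sum) (auto intro: sum_nonneg)
    finally show ?thesis .
  qed
  thus ?thesis using matrix_bound[of M e] by blast
qed

lemma opnorm_bdd:
  fixes M :: "real^'c^'r"
  assumes p: "p \<ge> 1"
  shows "bdd_above ((\<lambda>y. pnorm p (M *v y) / pnorm p y) ` {y. y \<noteq> 0})"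
proof -
  obtain K where K: "\<And>y. norm (M *v y) \<le> K * norm y" using matrix_exists_bound by blast
  have "pnorm p (M *v y) / pnorm p y \<le> real CARD('r) * K * real CARD('c)" if "y \<noteq> 0" for y
  proof -
    have py: "pnorm p y > 0" using pnorm_pos[OF p that] .
    have "0 \<le> K * norm y" using K[of y] norm_ge_zero order.trans by blast
    hence K0: "K \<ge> 0" using that by (simp add: zero_le_mult_iff)
    have "pnorm p (M *v y) \<le> real CARD('r) * norm (M *v y)" by (rule pnorm_le_norm[OF p])
    also have "\<dots> \<le> real CARD('r) * (K * norm y)" by (intro mult_left_mono K) auto
    also have "\<dots> \<le> real CARD('r) * (K * (real CARD('c) * pnorm p y))"
      by (intro mult_left_mono norm_le_pnorm p K0) auto
    finally show ?thesis using py by (simp add: divide_le_eq algebra_simps)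
  qed
  thus ?thesis by (auto simp: bdd_above_def)
qed

lemma opnorm_ge:
  fixes M :: "real^'c^'r"
  assumes p: "p \<ge> 1" and "y \<noteq> 0"
  shows "pnorm p (M *v y) / pnorm p y \<le> opnorm p M"
  unfolding opnorm_def by (rule cSUP_upper[OF _ opnorm_bdd[OF p]]) (use assms in auto)

lemma opnorm_le:
  fixes M :: "real^'c^'r"
  assumes p: "p \<ge> 1" and K: "\<And>y. pnorm p (M *v y) \<le> K * pnorm p y"
  shows "opnorm p M \<le> K"
  unfolding opnorm_def
proof (rule cSUP_least)
  show "{y::real^'c. y \<noteq> 0} \<noteq> {}" using exists_nonzero by auto
  fix y :: "real^'c" assume "y \<in> {y. y \<noteq> 0}"
  hence py: "pnorm p y > 0" using pnorm_pos[OF p] by auto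
  thus "pnorm p (M *v y) / pnorm p y \<le> K" using K[of y] by (simp add: divide_le_eq)
qed

lemma rank_less_iff:
  fixes A :: "real^'c^'r"
  shows "rank A < CARD('r) \<longleftrightarrow> \<not> inj ((*v) (transpose A))"
  using less_rank_noninjective[of "transpose A"] rank_transpose[of A] by simp

lemma matrix_inv_props:
  fixes G :: "real^'n^'n"
  assumes "invertible G"
  shows "G ** matrix_inv G = mat 1" "matrix_inv G ** G = mat 1"
proof -
  have "\<exists>G'. G ** G' = mat 1 \<and> G' ** G = mat 1" using assms unfolding invertible_def by blast
  hence "G ** matrix_inv G = mat 1 \<and> matrix_inv G ** G = mat 1"
    unfolding matrix_inv_def by (rule someI_ex)
  thus "G ** matrix_inv G = mat 1" "matrix_inv G ** G = mat 1" by auto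
qed

lemma gram_quad: "w \<bullet> ((A ** transpose A) *v w) = (transpose A *v w) \<bullet> (transpose A *v w)"
  for A :: "real^'c^'r"
  by (simp only: matrix_vector_mul_assoc[symmetric] dot_transpose)

lemma pinv_basic:
  fixes A :: "real^'c^'r"
  assumes inj: "inj ((*v) (transpose A))"
  shows "invertible (A ** transpose A)" "A ** pinv A = mat 1"
proof -
  have ker: "\<forall>w. (A ** transpose A) *v w = 0 \<longrightarrow> w = 0"
  proof (intro allI impI)
    fix w assume "(A ** transpose A) *v w = 0"
    hence "(transpose A *v w) \<bullet> (transpose A *v w) = 0" using gram_quad[of w A] by simp
    hence "transpose A *v w = transpose A *v 0" by simp
    thus "w = 0" using inj by (meson injD)
  qed
  show inv: "invertible (A ** transpose A)"
    using ker unfolding invertible_left_inverse matrix_left_invertible_ker by blast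
  show "A ** pinv A = mat 1"
    unfolding pinv_def using matrix_inv_props(1)[OF inv] by (simp add: matrix_mul_assoc)
qed

lemma pinv_norm:
  fixes A :: "real^'c^'r"
  assumes s: "s > 0" and low: "\<And>w. s * norm w \<le> norm (transpose A *v w)"
  shows "inj ((*v) (transpose A))" "norm (pinv A *v u) \<le> norm u / s"
proof -
  show inj: "inj ((*v) (transpose A))"
  proof (rule injI)
    fix x y assume "transpose A *v x = transpose A *v y"
    hence "transpose A *v (x - y) = 0" by (simp add: matrix_vector_mult_diff_distrib)
    hence "s * norm (x - y) \<le> 0" using low[of "x-y"] by simp
    thus "x = y" using s by (simp add: mult_le_0_iff)
  qed
  define G where "G = A ** transpose A"
  have inv: "invertible G" using pinv_basic(1)[OF inj] G_def by simp
  define w where "w = matrix_inv G *v u"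
  have Gw: "G *v w = u" unfolding w_def
    by (simp add: matrix_vector_mul_assoc matrix_inv_props(1)[OF inv])
  define z where "z = transpose A *v w"
  have pz: "pinv A *v u = z" unfolding z_def w_def pinv_def G_def by (simp add: matrix_vector_mul_assoc)
  have "z \<bullet> z = w \<bullet> u" using gram_quad[of w A] Gw unfolding z_def G_def by simp
  also have "\<dots> \<le> norm w * norm u" using Cauchy_Schwarz_ineq2[of w u] by simp
  finally have zz: "norm z * norm z \<le> norm w * norm u" by (simp add: dot_square_norm power2_eq_square)
  have sw: "s * norm w \<le> norm z" using low[of w] z_def by simp
  have "norm z \<le> norm u / s"
  proof (cases "norm z = 0")
    case True thus ?thesis using s by simp
  next
    case False
    hence zp: "norm z > 0" by simp
    have "s * (norm z * norm z) \<le> s * (norm w * norm u)" using zz s by simp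
    also have "\<dots> \<le> norm z * norm u" using sw by (simp add: mult.assoc[symmetric] mult_right_mono)
    finally have "s * norm z * norm z \<le> norm u * norm z" by (simp add: algebra_simps)
    hence "s * norm z \<le> norm u" using zp by simp
    thus ?thesis using s by (simp add: le_divide_eq mult.commute)
  qed
  thus "norm (pinv A *v u) \<le> norm u / s" using pz by simp
qed

lemma bb_norm_ge: assumes "i \<in> multi_idx m" shows "pnorm p (b i) \<le> bb_norm p m b"
  unfolding bb_norm_def by (rule Max_ge) (use assms finite_multi_idx in auto)

lemma bb_norm_le: assumes "\<And>i. i \<in> multi_idx m \<Longrightarrow> pnorm p (b i) \<le> X" shows "bb_norm p m b \<le> X"
  unfolding bb_norm_def using assms finite_multi_idx multi_idx_ne by (subst Max_le_iff) auto

lemma norm_le_bb: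
  fixes b :: "('n::finite option \<Rightarrow> nat) \<Rightarrow> real^'n"
  assumes p: "p \<ge> 1" and "i \<in> multi_idx m"
  shows "norm (b i) \<le> real CARD('n) * bb_norm p m b"
proof -
  have "norm (b i) \<le> real CARD('n) * pnorm p (b i)" by (rule norm_le_pnorm[OF p])
  also have "\<dots> \<le> real CARD('n) * bb_norm p m b" by (intro mult_left_mono bb_norm_ge assms) auto
  finally show ?thesis .
qed

lemma bb_norm_nonneg: assumes p: "p \<ge> 1" shows "bb_norm p m b \<ge> 0"
  using bb_norm_ge[where p=p and b=b, OF multi_idx_ne] pnorm_nonneg[OF p] by (meson order.trans)

definition val :: "ereal \<Rightarrow> ('n::finite option \<Rightarrow> nat) \<Rightarrow> (('n option \<Rightarrow> nat) \<Rightarrow> real^'n) \<Rightarrow> real^'n option \<Rightarrow> ereal" where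
  "val p m b x = min (if bb_eval m b x = 0 then \<infinity> else ereal (1 / pnorm p (bb_eval m b x)))
            (if rank (bb_jac m b x) < CARD('n) then \<infinity>
             else ereal (opnorm p (pinv (bb_jac m b x))))"

lemma kappa_val: "kappa p m b = ereal (bb_norm p m b) * (SUP x\<in>unit_cube. val p m b x)"
  unfolding kappa_def val_def by simp

definition K1 :: "('n::finite option \<Rightarrow> nat) \<Rightarrow> real" where
  "K1 m = real CARD('n option) ^ 5 * (CB m + CD m) + 1"

lemma card_le_opt: "real CARD('n::finite) \<le> real CARD('n option)"
  by (simp add: card_option)

lemma card_ge1: "real CARD('n::finite) \<ge> 1" by simp

lemma not_inj_kernel:
  fixes B :: "real^'a^'b"
  assumes "\<not> inj ((*v) B)" shows "\<exists>w. w \<noteq> 0 \<and> B *v w = 0"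
proof -
  obtain x y where "B *v x = B *v y" "x \<noteq> y" using assms unfolding inj_def by blast
  thus ?thesis by (intro exI[of _ "x - y"]) (simp add: matrix_vector_mult_diff_distrib)
qed

lemma part1_val:
  fixes m :: "'n::finite option \<Rightarrow> nat" and b b' :: "('n option \<Rightarrow> nat) \<Rightarrow> real^'n"
  assumes p: "p \<ge> 1" and nd: "\<not> degenerate m b" and x: "x \<in> unit_cube"
    and fx: "bb_eval m b' x = 0" and rk: "rank (bb_jac m b' x) < CARD('n)"
  defines "D \<equiv> bb_norm p m (\<lambda>i. b' i - b i)"
  shows "D > 0 \<and> ereal (1 / (K1 m * D)) \<le> val p m b x"
proof -
  define Nn where "Nn = real CARD('n)"
  define No where "No = real CARD('n option)"
  have Nn1: "Nn \<ge> 1" and NnNo: "Nn \<le> No" unfolding Nn_def No_def using card_le_opt by auto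
  have No1: "No \<ge> 1" using Nn1 NnNo by linarith
  define d where "d = (\<lambda>i. b' i - b i)"
  have D0: "D \<ge> 0" unfolding D_def by (rule bb_norm_nonneg[OF p])
  have dn: "norm (d i) \<le> Nn * D" if "i \<in> multi_idx m" for i
    unfolding Nn_def D_def d_def by (rule norm_le_bb[OF p that])
  have CB0: "CB m \<ge> 0" by (rule CB_nonneg)
  have CD0: "CD m \<ge> 0" by (rule CD_nonneg)
  have K1pos: "K1 m > 0" unfolding K1_def using CB0 CD0 by (simp add: add_nonneg_pos)
  \<comment> \<open>constants\<close>
  have NnNo_pow: "Nn ^ k \<le> No ^ 5" if "k \<le> 5" for k
  proof -
    have "Nn ^ k \<le> No ^ k" using Nn1 NnNo by (intro power_mono) auto
    also have "\<dots> \<le> No ^ 5" using No1 that by (intro power_increasing) auto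
    finally show ?thesis .
  qed
  have KB: "Nn^2 * CB m \<le> K1 m"
  proof -
    have "Nn^2 * CB m \<le> No^5 * CB m" using NnNo_pow[of 2] CB0 by (intro mult_right_mono) auto
    also have "\<dots> \<le> K1 m" unfolding K1_def No_def using CD0 CB0 by (simp add: algebra_simps)
    finally show ?thesis .
  qed
  have KD: "Nn^3 * No^2 * CD m \<le> K1 m"
  proof -
    have "Nn^3 * No^2 \<le> No^3 * No^2" using Nn1 NnNo by (intro mult_right_mono power_mono) auto
    also have "\<dots> = No^5" by (simp add: power_add[symmetric])
    finally have "Nn^3 * No^2 * CD m \<le> No^5 * CD m" using CD0 by (intro mult_right_mono) auto
    also have "\<dots> \<le> K1 m" unfolding K1_def No_def using CD0 CB0 by (simp add: algebra_simps)
    finally show ?thesis .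
  qed
  \<comment> \<open>value bound\<close>
  have fxd: "bb_eval m b x = - bb_eval m d x" using fx unfolding d_def bb_eval_diff by simp
  have pf: "pnorm p (bb_eval m b x) \<le> K1 m * D"
  proof -
    have "pnorm p (bb_eval m b x) \<le> Nn * norm (bb_eval m b x)"
      unfolding Nn_def by (rule pnorm_le_norm[OF p])
    also have "norm (bb_eval m b x) \<le> CB m * (Nn * D)"
      unfolding fxd norm_minus_cancel by (rule bb_eval_norm_le[OF x dn])
    hence "Nn * norm (bb_eval m b x) \<le> Nn * (CB m * (Nn * D))" using Nn1 by simp
    also have "\<dots> = (Nn^2 * CB m) * D" by (simp add: power2_eq_square)
    also have "\<dots> \<le> K1 m * D" using KB D0 by (intro mult_right_mono) auto
    finally show ?thesis .
  qed
  define A where "A = bb_jac m b x"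
  define B where "B = bb_jac m b' x"
  have BA: "B - A = bb_jac m d x" unfolding A_def B_def d_def bb_jac_diff by simp
  have BAe: "\<bar>(B - A) $ k $ j\<bar> \<le> CD m * (Nn * D)" for k j
    unfolding BA by (rule bb_jac_le[OF x dn])
  show ?thesis
  proof (cases "rank A < CARD('n)")
    case True
    hence f0: "bb_eval m b x \<noteq> 0" using nd x unfolding degenerate_def A_def by auto
    have pp: "pnorm p (bb_eval m b x) > 0" by (rule pnorm_pos[OF p f0])
    have Dp: "D > 0"
    proof (rule ccontr)
      assume "\<not> D > 0" hence "D = 0" using D0 by simp
      thus False using pf pp by simp
    qed
    have "1 / (K1 m * D) \<le> 1 / pnorm p (bb_eval m b x)"
      by (rule frac_le) (use pp pf in auto)
    thus ?thesis using Dp True f0 unfolding val_def A_def by simp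
  next
    case False
    hence inj: "inj ((*v) (transpose A))" using rank_less_iff[of A] by simp
    have AP: "A ** pinv A = mat 1" by (rule pinv_basic(2)[OF inj])
    obtain w where w0: "w \<noteq> 0" and Bw: "transpose B *v w = 0"
      using not_inj_kernel rk rank_less_iff[of B] unfolding B_def by blast
    define P where "P = pinv A"
    have "w \<bullet> w = w \<bullet> (A *v (P *v w))"
      by (simp add: P_def matrix_vector_mul_assoc AP)
    also have "\<dots> = w \<bullet> ((A - B) *v (P *v w)) + w \<bullet> (B *v (P *v w))"
      by (simp add: matrix_vector_mult_diff_rdistrib inner_diff_right)
    also have "w \<bullet> (B *v (P *v w)) = 0"
      by (simp only: dot_transpose Bw) simp
    finally have "w \<bullet> w = w \<bullet> ((A - B) *v (P *v w))" by simp
    also have "\<dots> \<le> norm w * norm ((A - B) *v (P *v w))"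
      using Cauchy_Schwarz_ineq2[of w "(A - B) *v (P *v w)"] abs_ge_self[of "w \<bullet> ((A - B) *v (P *v w))"] by linarith
    also have "norm ((A - B) *v (P *v w)) \<le> Nn * No * (CD m * (Nn * D)) * norm (P *v w)"
      unfolding Nn_def No_def
    proof (rule matrix_bound)
      fix k j
      have "(A - B) $ k $ j = - ((B - A) $ k $ j)" by simp
      thus "\<bar>(A - B) $ k $ j\<bar> \<le> CD m * (real CARD('n) * D)" using BAe[of k j] unfolding Nn_def by simp
    qed
    finally have ww: "norm w * norm w \<le> norm w * (Nn * No * (CD m * (Nn * D)) * norm (P *v w))"
      by (simp add: dot_square_norm power2_eq_square mult_left_mono)
    have wn: "norm w \<le> (Nn^2 * No * CD m * D) * norm (P *v w)"
      using ww w0 by (simp add: power2_eq_square algebra_simps)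
    have pw: "pnorm p w > 0" by (rule pnorm_pos[OF p w0])
    have "pnorm p w \<le> Nn * norm w" unfolding Nn_def by (rule pnorm_le_norm[OF p])
    also have "\<dots> \<le> Nn * ((Nn^2 * No * CD m * D) * norm (P *v w))" using wn Nn1 by simp
    also have "norm (P *v w) \<le> No * pnorm p (P *v w)" unfolding No_def by (rule norm_le_pnorm[OF p])
    hence "Nn * ((Nn^2 * No * CD m * D) * norm (P *v w)) \<le> Nn * ((Nn^2 * No * CD m * D) * (No * pnorm p (P *v w)))"
      using Nn1 CD0 D0 No1 by (intro mult_left_mono) auto
    also have "\<dots> = (Nn^3 * No^2 * CD m) * D * pnorm p (P *v w)"
      by (simp add: power2_eq_square power3_eq_cube)
    also have "\<dots> \<le> K1 m * D * pnorm p (P *v w)"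
      using KD D0 pnorm_nonneg[OF p] by (intro mult_right_mono) auto
    finally have pwb: "pnorm p w \<le> K1 m * D * pnorm p (P *v w)" .
    have Dp: "D > 0"
    proof (rule ccontr)
      assume "\<not> D > 0" hence "D = 0" using D0 by simp
      thus False using pwb pw by simp
    qed
    have KDp: "K1 m * D > 0" using K1pos Dp by simp
    have "1 / (K1 m * D) \<le> pnorm p (P *v w) / pnorm p w"
      using pwb pw KDp by (simp add: divide_le_eq le_divide_eq mult.commute)
    also have "\<dots> \<le> opnorm p P" by (rule opnorm_ge[OF p w0])
    finally have o: "1 / (K1 m * D) \<le> opnorm p (pinv A)" unfolding P_def .
    have "ereal (1 / (K1 m * D)) \<le> (if bb_eval m b x = 0 then \<infinity> else ereal (1 / pnorm p (bb_eval m b x)))"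
    proof (cases "bb_eval m b x = 0")
      case False
      have pp: "pnorm p (bb_eval m b x) > 0" by (rule pnorm_pos[OF p False])
      have "1 / (K1 m * D) \<le> 1 / pnorm p (bb_eval m b x)"
        by (rule frac_le) (use pp pf in auto)
      thus ?thesis using False by simp
    qed simp
    thus ?thesis using Dp o False unfolding val_def A_def by simp
  qed
qed

definition rr :: "('j::finite \<Rightarrow> nat) \<Rightarrow> ('j \<Rightarrow> nat) \<Rightarrow> real^'j" where
  "rr m i = (\<chi> j. real (i j) / real (m j))"

lemma BB_inner:
  assumes m: "\<forall>j. m j \<ge> 1"
  shows "(\<Sum>i\<in>multi_idx m. BB m i y * (g \<bullet> (rr m i - x))) = g \<bullet> (y - x)"
proof -
  have "(\<Sum>i\<in>multi_idx m. BB m i y * (g \<bullet> (rr m i - x)))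
      = (\<Sum>i\<in>multi_idx m. \<Sum>j\<in>UNIV. g $ j * (real (i j) * BB m i y) / real (m j) - g $ j * x $ j * BB m i y)"
    unfolding inner_vec_def rr_def by (auto simp: sum_distrib_left algebra_simps intro!: sum.cong)
  also have "\<dots> = (\<Sum>j\<in>UNIV. \<Sum>i\<in>multi_idx m. g $ j * (real (i j) * BB m i y) / real (m j) - g $ j * x $ j * BB m i y)"
    by (rule sum.swap)
  also have "\<dots> = (\<Sum>j\<in>UNIV. g $ j * (\<Sum>i\<in>multi_idx m. real (i j) * BB m i y) / real (m j) - g $ j * x $ j * (\<Sum>i\<in>multi_idx m. BB m i y))"
    by (simp add: sum_subtractf sum_distrib_left sum_divide_distrib)
  also have "\<dots> = (\<Sum>j\<in>UNIV. g $ j * (y $ j - x $ j))"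
  proof (rule sum.cong)
    fix j
    have "real (m j) \<noteq> 0" using m by (metis not_one_le_zero of_nat_eq_0_iff)
    thus "g $ j * (\<Sum>i\<in>multi_idx m. real (i j) * BB m i y) / real (m j) - g $ j * x $ j * (\<Sum>i\<in>multi_idx m. BB m i y) = g $ j * (y $ j - x $ j)"
      unfolding BB_sum_k BB_sum by (simp add: algebra_simps)
  qed simp
  also have "\<dots> = g \<bullet> (y - x)" unfolding inner_vec_def by simp
  finally show ?thesis .
qed

lemma bb_eval_affine:
  assumes m: "\<forall>j. m j \<ge> 1"
  shows "bb_eval m (\<lambda>i. c + (g \<bullet> (rr m i - x)) *\<^sub>R u) y = c + (g \<bullet> (y - x)) *\<^sub>R u"
proof -
  have "bb_eval m (\<lambda>i. c + (g \<bullet> (rr m i - x)) *\<^sub>R u) y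
     = (\<Sum>i\<in>multi_idx m. BB m i y) *\<^sub>R c + (\<Sum>i\<in>multi_idx m. BB m i y * (g \<bullet> (rr m i - x))) *\<^sub>R u"
    unfolding bb_eval_def BB_def[symmetric]
    by (simp add: scaleR_add_right sum.distrib scaleR_sum_left)
  thus ?thesis unfolding BB_sum BB_inner[OF m] by simp
qed

lemma inner_upd: "g \<bullet> (upd x j t - x) = g $ j * (t - x $ j)"
proof -
  have "g \<bullet> (upd x j t - x) = (\<Sum>l\<in>UNIV. if l = j then g $ j * (t - x $ j) else 0)"
    unfolding inner_vec_def by (rule sum.cong) (auto simp: upd_nth)
  thus ?thesis by simp
qed

lemma bb_jac_affine:
  assumes m: "\<forall>j. m j \<ge> 1"
  shows "bb_jac m (\<lambda>i. c + (g \<bullet> (rr m i - x)) *\<^sub>R u) x = (\<chi> k j. u $ k * g $ j)"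
proof -
  have "bb_jac m (\<lambda>i. c + (g \<bullet> (rr m i - x)) *\<^sub>R u) x $ k $ j = u $ k * g $ j" for k j
  proof -
    have "bb_jac m (\<lambda>i. c + (g \<bullet> (rr m i - x)) *\<^sub>R u) x $ k $ j
        = deriv (\<lambda>t. c $ k + (g $ j * (t - x $ j)) * u $ k) (x $ j)"
      unfolding bb_jac_def upd_def[symmetric] bb_eval_affine[OF m] inner_upd by simp
    also have "\<dots> = g $ j * u $ k"
      by (rule DERIV_imp_deriv) (auto intro!: derivative_eq_intros)
    finally show ?thesis by simp
  qed
  thus ?thesis by (simp add: vec_eq_iff)
qed

lemma norm_rr_x:
  fixes m :: "'j::finite \<Rightarrow> nat"
  assumes m: "\<forall>j. m j \<ge> 1" and i: "i \<in> multi_idx m" and x: "x \<in> unit_cube"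
  shows "norm (rr m i - x) \<le> real CARD('j)"
proof -
  have "norm (rr m i - x) \<le> (\<Sum>j\<in>UNIV. \<bar>(rr m i - x) $ j\<bar>)" by (rule norm_le_l1_cart)
  also have "\<dots> \<le> (\<Sum>j\<in>(UNIV::'j set). 1)"
  proof (rule sum_mono)
    fix j
    have mj: "real (m j) > 0" using m by (metis not_one_le_zero of_nat_0_less_iff zero_less_iff_neq_zero)
    have "i j \<le> m j" using i unfolding multi_idx_def by auto
    hence a: "0 \<le> real (i j) / real (m j)" "real (i j) / real (m j) \<le> 1" using mj by (auto simp: divide_le_eq)
    have b: "0 \<le> x $ j" "x $ j \<le> 1" using x unfolding unit_cube_iff by auto
    have "\<bar>real (i j) / real (m j) - x $ j\<bar> \<le> 1" using a b by (intro abs_leI) linarith+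
    thus "\<bar>(rr m i - x) $ j\<bar> \<le> 1" unfolding rr_def by simp
  qed
  finally show ?thesis by simp
qed

lemma transpose_outer: "transpose (\<chi> k j. u $ k * g $ j) *v u = (u \<bullet> u) *\<^sub>R (g::real^'c)"
  for u :: "real^'r"
  by (simp add: vec_eq_iff matrix_vector_mult_def transpose_def inner_vec_def sum_distrib_left algebra_simps
      flip: transpose_matrix_vector)

lemma transpose_minus: "transpose (A - B) = transpose A - transpose (B::real^'c^'r)"
  by (simp add: transpose_def vec_eq_iff)

lemma construct:
  fixes m :: "'n::finite option \<Rightarrow> nat" and b :: "('n option \<Rightarrow> nat) \<Rightarrow> real^'n"
    and g :: "real^'n option" and u :: "real^'n"
  assumes m: "\<forall>j. m j \<ge> 1" and p: "p \<ge> 1" and x: "x \<in> unit_cube"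
  defines "b' \<equiv> \<lambda>i. b i - (bb_eval m b x + (g \<bullet> (rr m i - x)) *\<^sub>R u)"
  shows "bb_eval m b' x = 0" "bb_jac m b' x = bb_jac m b x - (\<chi> k j. u $ k * g $ j)"
    "bb_norm p m (\<lambda>i. b' i - b i) \<le> real CARD('n) * (norm (bb_eval m b x) + real CARD('n option) * norm g * norm u)"
proof -
  show "bb_eval m b' x = 0" unfolding b'_def bb_eval_diff bb_eval_affine[OF m] by simp
  show "bb_jac m b' x = bb_jac m b x - (\<chi> k j. u $ k * g $ j)"
    unfolding b'_def bb_jac_diff bb_jac_affine[OF m] by simp
  show "bb_norm p m (\<lambda>i. b' i - b i) \<le> real CARD('n) * (norm (bb_eval m b x) + real CARD('n option) * norm g * norm u)"
  proof (rule bb_norm_le)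
    fix i assume i: "i \<in> multi_idx m"
    have "pnorm p (b' i - b i) \<le> real CARD('n) * norm (b' i - b i)" by (rule pnorm_le_norm[OF p])
    also have "norm (b' i - b i) = norm (bb_eval m b x + (g \<bullet> (rr m i - x)) *\<^sub>R u)"
    proof -
      have "b' i - b i = - (bb_eval m b x + (g \<bullet> (rr m i - x)) *\<^sub>R u)" unfolding b'_def by simp
      thus ?thesis by (simp only: norm_minus_cancel)
    qed
    also have "\<dots> \<le> norm (bb_eval m b x) + \<bar>g \<bullet> (rr m i - x)\<bar> * norm u"
      by (metis norm_scaleR norm_triangle_ineq)
    also have "\<bar>g \<bullet> (rr m i - x)\<bar> * norm u \<le> (norm g * real CARD('n option)) * norm u"
    proof (rule mult_right_mono)
      have "\<bar>g \<bullet> (rr m i - x)\<bar> \<le> norm g * norm (rr m i - x)" by (rule Cauchy_Schwarz_ineq2)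
      also have "\<dots> \<le> norm g * real CARD('n option)" by (intro mult_left_mono norm_rr_x m i x) auto
      finally show "\<bar>g \<bullet> (rr m i - x)\<bar> \<le> norm g * real CARD('n option)" .
    qed simp
    finally show "pnorm p (b' i - b i) \<le> real CARD('n) * (norm (bb_eval m b x) + real CARD('n option) * norm g * norm u)"
      by (simp add: mult_left_mono algebra_simps)
  qed
qed

lemma opnorm_pinv_pos:
  fixes A :: "real^'c^'r"
  assumes p: "p \<ge> 1" and inj: "inj ((*v) (transpose A))"
  shows "opnorm p (pinv A) > 0"
proof -
  obtain y :: "real^'r" where y: "y \<noteq> 0" using exists_nonzero by blast
  have "A *v (pinv A *v y) = y" by (simp add: matrix_vector_mul_assoc pinv_basic(2)[OF inj])
  hence "pinv A *v y \<noteq> 0" using y by auto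
  hence "pnorm p (pinv A *v y) / pnorm p y > 0" using pnorm_pos[OF p, of y] pnorm_pos[OF p, of "pinv A *v y"] y by simp
  also have "\<dots> \<le> opnorm p (pinv A)" by (rule opnorm_ge[OF p y])
  finally show ?thesis .
qed

lemma val_pos:
  fixes m :: "'n::finite option \<Rightarrow> nat" and b :: "('n option \<Rightarrow> nat) \<Rightarrow> real^'n"
  assumes p: "p \<ge> 1" and nd: "\<not> degenerate m b" and x: "x \<in> unit_cube"
  shows "val p m b x > 0"
proof -
  have a: "(if bb_eval m b x = 0 then \<infinity> else ereal (1 / pnorm p (bb_eval m b x))) > 0"
    using pnorm_pos[OF p] by auto
  have b: "(if rank (bb_jac m b x) < CARD('n) then \<infinity> else ereal (opnorm p (pinv (bb_jac m b x)))) > 0"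
    using opnorm_pinv_pos[OF p] rank_less_iff[of "bb_jac m b x"] by auto
  show ?thesis using a b unfolding val_def by simp
qed

lemma part2_bound:
  fixes m :: "'n::finite option \<Rightarrow> nat" and b :: "('n option \<Rightarrow> nat) \<Rightarrow> real^'n"
  assumes m: "\<forall>j. m j \<ge> 1" and p: "p \<ge> 1" and nd: "\<not> degenerate m b" and x: "x \<in> unit_cube"
    and v: "val p m b x = ereal v"
  shows "\<exists>b'. degenerate m b' \<and> bb_norm p m (\<lambda>i. b' i - b i) \<le> 3 * real CARD('n option) ^ 4 / v"
proof -
  define Nn where "Nn = real CARD('n)"
  define No where "No = real CARD('n option)"
  have Nn1: "Nn \<ge> 1" and NnNo: "Nn \<le> No" unfolding Nn_def No_def using card_le_opt by auto
  have No1: "No \<ge> 1" using Nn1 NnNo by linarith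
  have vpos: "v > 0" using val_pos[OF p nd x] v by simp
  define c where "c = bb_eval m b x"
  define A where "A = bb_jac m b x"
  have pc: "pnorm p c \<le> 1 / v"
  proof (cases "c = 0")
    case True thus ?thesis using vpos by (simp add: pnorm_zero[OF p])
  next
    case False
    have "ereal v \<le> ereal (1 / pnorm p c)" using v[symmetric] False unfolding val_def c_def by (simp add: min.coboundedI1)
    hence "v \<le> 1 / pnorm p c" by simp
    thus ?thesis using vpos pnorm_pos[OF p False] by (simp add: le_divide_eq mult.commute)
  qed
  have nc: "norm c \<le> Nn / v"
  proof -
    have "norm c \<le> Nn * pnorm p c" unfolding Nn_def by (rule norm_le_pnorm[OF p])
    also have "\<dots> \<le> Nn * (1 / v)" using pc Nn1 by (intro mult_left_mono) auto
    finally show ?thesis by simp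
  qed
  have bound: "\<exists>b'. degenerate m b' \<and> bb_norm p m (\<lambda>i. b' i - b i) \<le> Nn * (norm c + No * norm g * norm u)"
    if rk: "rank (A - (\<chi> k j. u $ k * g $ j)) < CARD('n)" for g u
  proof -
    define b' where "b' = (\<lambda>i. b i - (bb_eval m b x + (g \<bullet> (rr m i - x)) *\<^sub>R u))"
    have "degenerate m b'" unfolding degenerate_def
      using construct(1,2)[OF m p x, of b g u] x rk unfolding b'_def A_def by auto
    moreover have "bb_norm p m (\<lambda>i. b' i - b i) \<le> Nn * (norm c + No * norm g * norm u)"
      using construct(3)[OF m p x, of b g u] unfolding b'_def Nn_def No_def c_def by simp
    ultimately show ?thesis by blast
  qed
  have C: "Nn * Nn \<le> 3 * No^4" and C0: "Nn * Nn \<le> No^4"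
  proof -
    have "Nn * Nn \<le> No * No" using Nn1 NnNo by (intro mult_mono) auto
    also have "\<dots> \<le> No^4"
    proof -
      have "No^2 \<le> No^4" by (rule power_increasing) (use No1 in auto)
      thus ?thesis by (simp add: power2_eq_square)
    qed
    finally have C0: "Nn * Nn \<le> No^4" .
    moreover have "0 \<le> No^4" using No1 by simp
    ultimately show "Nn * Nn \<le> 3 * No^4" by linarith
    show "Nn * Nn \<le> No^4" by (rule C0)
  qed
  show ?thesis
  proof (cases "rank A < CARD('n)")
    case True
    obtain b' where b': "degenerate m b'" "bb_norm p m (\<lambda>i. b' i - b i) \<le> Nn * (norm c + No * norm (0::real^'n option) * norm (0::real^'n))"
    proof -
      have "(\<chi> k j. (0::real^'n) $ k * (0::real^'n option) $ j) = (0 :: real^'n option^'n)"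
        by (simp add: vec_eq_iff)
      hence "rank (A - (\<chi> k j. (0::real^'n) $ k * (0::real^'n option) $ j)) < CARD('n)" using True by simp
      thus ?thesis using bound that by blast
    qed
    have "Nn * (norm c + No * norm (0::real^'n option) * norm (0::real^'n)) \<le> Nn * (Nn / v)"
      using mult_left_mono[OF nc, of Nn] Nn1 by simp
    also have "\<dots> = (Nn * Nn) / v" by simp
    also have "\<dots> \<le> 3 * No ^ 4 / v" using C vpos by (simp add: divide_right_mono)
    finally show ?thesis using b' unfolding No_def by auto
  next
    case False
    hence inj: "inj ((*v) (transpose A))" using rank_less_iff[of A] by simp
    have AP: "A ** pinv A = mat 1" by (rule pinv_basic(2)[OF inj])
    define s where "s = opnorm p (pinv A)"
    have vs: "v \<le> s"
    proof -
      have "ereal v \<le> ereal s" using v[symmetric] False unfolding val_def s_def A_def by (simp add: min.coboundedI2)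
      thus ?thesis by simp
    qed
    have spos: "s > 0" using vpos vs by simp
    have "s / 2 < (SUP y\<in>{y. y \<noteq> 0}. pnorm p (pinv A *v y) / pnorm p y)"
      using spos unfolding s_def opnorm_def by simp
    moreover have ne: "{y::real^'n. y \<noteq> 0} \<noteq> {}" using exists_nonzero by auto
    ultimately obtain y :: "real^'n" where y0: "y \<noteq> 0" and ys: "s / 2 < pnorm p (pinv A *v y) / pnorm p y"
      using less_cSUP_iff[OF ne opnorm_bdd[OF p]] by blast
    define G where "G = A ** transpose A"
    have inv: "invertible G" using pinv_basic(1)[OF inj] G_def by simp
    define u where "u = matrix_inv G *v y"
    have Gu: "G *v u = y" unfolding u_def
      by (simp add: matrix_vector_mul_assoc matrix_inv_props(1)[OF inv])
    define z where "z = transpose A *v u"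
    have pz: "pinv A *v y = z" unfolding z_def u_def pinv_def G_def by (simp add: matrix_vector_mul_assoc)
    have "A *v z = y" using AP pz by (metis matrix_vector_mul_assoc matrix_vector_mul_lid)
    hence z0: "z \<noteq> 0" using y0 by auto
    hence u0: "u \<noteq> 0" unfolding z_def by auto
    have zz: "norm z * norm z \<le> norm u * norm y"
    proof -
      have "z \<bullet> z = u \<bullet> y" using gram_quad[of u A] Gu unfolding z_def G_def by simp
      also have "\<dots> \<le> norm u * norm y" using Cauchy_Schwarz_ineq2[of u y] by simp
      finally show ?thesis by (simp add: dot_square_norm power2_eq_square)
    qed
    define g where "g = (1 / (u \<bullet> u)) *\<^sub>R z"
    have uu: "u \<bullet> u = norm u * norm u" by (simp add: dot_square_norm power2_eq_square)
    have nu: "norm u > 0" using u0 by simp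
    have nz: "norm z > 0" using z0 by simp
    have rk: "rank (A - (\<chi> k j. u $ k * g $ j)) < CARD('n)"
    proof -
      have "transpose (A - (\<chi> k j. u $ k * g $ j)) *v u = z - (u \<bullet> u) *\<^sub>R g"
        unfolding transpose_outer[symmetric] z_def
        by (simp only: transpose_minus matrix_vector_mult_diff_rdistrib)
      also have "\<dots> = 0" unfolding g_def using u0 by simp
      finally have "transpose (A - (\<chi> k j. u $ k * g $ j)) *v u = transpose (A - (\<chi> k j. u $ k * g $ j)) *v 0" by simp
      hence "\<not> inj ((*v) (transpose (A - (\<chi> k j. u $ k * g $ j))))" using u0 by (meson injD)
      thus ?thesis using rank_less_iff by blast
    qed
    have gu: "norm g * norm u = norm z / norm u"
      unfolding g_def uu using nu by (simp add: field_simps)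
    have "norm z / norm u \<le> norm y / norm z"
      using zz nu nz by (simp add: divide_le_eq le_divide_eq mult.commute mult.left_commute)
    also have "norm y / norm z \<le> (Nn * pnorm p y) / (pnorm p z / No)"
    proof (rule frac_le)
      show "0 \<le> Nn * pnorm p y" using Nn1 pnorm_nonneg[OF p, of y] by simp
      show "norm y \<le> Nn * pnorm p y" unfolding Nn_def by (rule norm_le_pnorm[OF p])
      show "0 < pnorm p z / No" using pnorm_pos[OF p z0] No1 by simp
      show "pnorm p z / No \<le> norm z" using pnorm_le_norm[OF p, of z] No1 unfolding No_def by (simp add: divide_le_eq mult.commute)
    qed
    also have "\<dots> = Nn * No * (pnorm p y / pnorm p z)" by (simp add: field_simps)
    also have "\<dots> \<le> Nn * No * (2 / v)"
    proof (intro mult_left_mono)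
      have py: "pnorm p y > 0" using pnorm_pos[OF p y0] .
      have pzz: "pnorm p z > 0" using pnorm_pos[OF p z0] .
      have "s / 2 < pnorm p z / pnorm p y" using ys pz by simp
      hence "v / 2 < pnorm p z / pnorm p y" using vs by simp
      hence "v * pnorm p y < 2 * pnorm p z" using py by (simp add: field_simps)
      thus "pnorm p y / pnorm p z \<le> 2 / v" using vpos pzz by (simp add: field_simps)
    qed (use Nn1 No1 in auto)
    finally have gub: "norm g * norm u \<le> Nn * No * (2 / v)" unfolding gu .
    obtain b' where b': "degenerate m b'" "bb_norm p m (\<lambda>i. b' i - b i) \<le> Nn * (norm c + No * norm g * norm u)"
      using bound[OF rk] by blast
    have "Nn * (norm c + No * norm g * norm u) \<le> Nn * (Nn / v + No * (Nn * No * (2 / v)))"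
    proof (intro mult_left_mono add_mono)
      show "No * norm g * norm u \<le> No * (Nn * No * (2 / v))"
        using mult_left_mono[OF gub, of No] No1 by (simp add: mult.assoc)
    qed (use nc Nn1 in auto)
    also have "\<dots> = (Nn * Nn + 2 * Nn * Nn * No * No) / v" using vpos by (simp add: field_simps)
    also have "\<dots> \<le> 3 * No ^ 4 / v"
    proof (rule divide_right_mono)
      have "Nn * Nn \<le> No * No" using Nn1 NnNo by (intro mult_mono) auto
      hence "Nn * Nn * (No * No) \<le> No * No * (No * No)" using No1 by (intro mult_right_mono) auto
      hence "2 * Nn * Nn * No * No \<le> 2 * No^4" by (simp add: power4_eq_xxxx algebra_simps)
      moreover have "Nn * Nn \<le> No^4" by (rule C0)
      ultimately show "Nn * Nn + 2 * Nn * Nn * No * No \<le> 3 * No ^ 4" by linarith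
    qed (use vpos in auto)
    finally show ?thesis using b' unfolding No_def by auto
  qed
qed

lemma cube_cbox: "unit_cube = cbox (0::real^'k) 1"
  unfolding unit_cube_def by (auto simp: mem_box_cart)

lemma compact_cube: "compact (unit_cube :: (real^'k) set)"
  unfolding cube_cbox by (rule compact_cbox)

lemma zero_cube: "0 \<in> unit_cube" unfolding unit_cube_def by simp

lemma isCont_eval: "isCont (\<lambda>x. bb_eval m b x) y"
  unfolding bb_eval_def bern_def by (auto intro!: continuous_intros)

lemma isCont_jac: "isCont (\<lambda>x. bb_jac m b x $ k $ j) y"
  unfolding bb_jac_formula dBB_def dbern_def bern_def by (auto intro!: continuous_intros)

lemma sup_finite:
  fixes m :: "'n::finite option \<Rightarrow> nat" and b :: "('n option \<Rightarrow> nat) \<Rightarrow> real^'n"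
  assumes p: "p \<ge> 1" and nd: "\<not> degenerate m b"
  shows "(SUP x\<in>unit_cube. val p m b x) < \<infinity>"
proof (rule ccontr)
  define Nn where "Nn = real CARD('n)"
  define No where "No = real CARD('n option)"
  have Nn1: "Nn \<ge> 1" and NnNo: "Nn \<le> No" unfolding Nn_def No_def using card_le_opt by auto
  have No1: "No \<ge> 1" using Nn1 NnNo by linarith
  assume "\<not> (SUP x\<in>unit_cube. val p m b x) < \<infinity>"
  hence inf: "(SUP x\<in>unit_cube. val p m b x) = \<infinity>" by (simp add: top.not_eq_extremum)
  have "\<forall>k::nat. \<exists>x\<in>unit_cube. ereal (real (Suc k)) < val p m b x"
    using inf by (simp add: less_SUP_iff[symmetric])
  then obtain xs where xs: "\<And>k. xs k \<in> unit_cube" "\<And>k. ereal (real (Suc k)) < val p m b (xs k)"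
    by metis
  obtain y r where y: "y \<in> unit_cube" and r: "strict_mono (r :: nat \<Rightarrow> nat)" and lim: "(xs \<circ> r) \<longlonglongrightarrow> y"
    using seq_compactE[OF compact_imp_seq_compact[OF compact_cube], of xs] xs(1) by metis
  \<comment> \<open>value bound\<close>
  have F1: "norm (bb_eval m b (xs k)) \<le> Nn * inverse (real (Suc k))" for k
  proof (cases "bb_eval m b (xs k) = 0")
    case True thus ?thesis using Nn1 by simp
  next
    case False
    have pp: "pnorm p (bb_eval m b (xs k)) > 0" by (rule pnorm_pos[OF p False])
    have "ereal (real (Suc k)) < ereal (1 / pnorm p (bb_eval m b (xs k)))"
      using xs(2)[of k] False unfolding val_def by (simp add: min_less_iff_conj)
    hence "real (Suc k) < 1 / pnorm p (bb_eval m b (xs k))" by simp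
    hence pk: "pnorm p (bb_eval m b (xs k)) \<le> inverse (real (Suc k))"
      using pp by (simp add: field_simps)
    have "norm (bb_eval m b (xs k)) \<le> Nn * pnorm p (bb_eval m b (xs k))"
      unfolding Nn_def by (rule norm_le_pnorm[OF p])
    also have "\<dots> \<le> Nn * inverse (real (Suc k))" using pk Nn1 by (intro mult_left_mono) auto
    finally show ?thesis .
  qed
  have F2: "\<not> rank (bb_jac m b (xs k)) < CARD('n) \<Longrightarrow> real (Suc k) < opnorm p (pinv (bb_jac m b (xs k)))" for k
    using xs(2)[of k] unfolding val_def by (simp add: min_less_iff_conj)
  \<comment> \<open>limit is a zero\<close>
  have "(\<lambda>k. bb_eval m b ((xs \<circ> r) k)) \<longlonglongrightarrow> bb_eval m b y"
    by (rule isCont_tendsto_compose[OF isCont_eval lim])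
  moreover have "(\<lambda>k. bb_eval m b ((xs \<circ> r) k)) \<longlonglongrightarrow> 0"
  proof (rule Lim_null_comparison)
    show "\<forall>\<^sub>F k in sequentially. norm (bb_eval m b ((xs \<circ> r) k)) \<le> Nn * inverse (real (Suc k))"
    proof (rule always_eventually, rule allI)
      fix k
      have "k \<le> r k" using r by (rule seq_suble)
      hence "inverse (real (Suc (r k))) \<le> inverse (real (Suc k))" by (simp add: le_imp_inverse_le)
      hence "Nn * inverse (real (Suc (r k))) \<le> Nn * inverse (real (Suc k))" using Nn1 by (intro mult_left_mono) auto
      thus "norm (bb_eval m b ((xs \<circ> r) k)) \<le> Nn * inverse (real (Suc k))" using F1[of "r k"] by simp
    qed
    show "(\<lambda>k. Nn * inverse (real (Suc k))) \<longlonglongrightarrow> 0"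
      using tendsto_mult[OF tendsto_const LIMSEQ_inverse_real_of_nat, of Nn] by simp
  qed
  ultimately have fy: "bb_eval m b y = 0" using LIMSEQ_unique by blast
  define A where "A = bb_jac m b y"
  have "\<not> rank A < CARD('n)" using nd y fy unfolding degenerate_def A_def by auto
  hence inj: "inj ((*v) (transpose A))" using rank_less_iff[of A] by simp
  obtain s where s: "s > 0" "\<And>w. s * norm w \<le> norm (transpose A *v w)"
    using linear_inj_bounded_below_pos[OF matrix_vector_mul_linear inj] by blast
  define e where "e = s / (2 * No * Nn)"
  have e: "e > 0" unfolding e_def using s Nn1 No1 by simp
  have ev1: "\<forall>\<^sub>F n in sequentially. \<forall>k j. \<bar>bb_jac m b (xs (r n)) $ k $ j - A $ k $ j\<bar> < e"
  proof (intro eventually_all_finite)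
    fix k j
    have "(\<lambda>n. bb_jac m b ((xs \<circ> r) n) $ k $ j) \<longlonglongrightarrow> A $ k $ j"
      unfolding A_def by (rule isCont_tendsto_compose[OF isCont_jac lim])
    hence "\<forall>\<^sub>F n in sequentially. dist (bb_jac m b ((xs \<circ> r) n) $ k $ j) (A $ k $ j) < e"
      using e by (rule tendstoD)
    thus "\<forall>\<^sub>F n in sequentially. \<bar>bb_jac m b (xs (r n)) $ k $ j - A $ k $ j\<bar> < e"
      by (simp add: dist_real_def)
  qed
  define Bd where "Bd = 2 * No * Nn / s"
  obtain n0 :: nat where n0: "Bd < real n0" using reals_Archimedean2 by blast
  have ev2: "\<forall>\<^sub>F n in sequentially. Bd < real (Suc (r n))"
  proof (rule eventually_sequentiallyI[of n0])
    fix n assume "n0 \<le> n"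
    moreover have "n \<le> r n" using r by (rule seq_suble)
    ultimately show "Bd < real (Suc (r n))" using n0 by linarith
  qed
  obtain n where n1: "\<forall>k j. \<bar>bb_jac m b (xs (r n)) $ k $ j - A $ k $ j\<bar> < e"
    and n2: "Bd < real (Suc (r n))"
    using eventually_happens'[OF sequentially_bot eventually_conj[OF ev1 ev2]] by blast
  define An where "An = bb_jac m b (xs (r n))"
  have low: "s / 2 * norm w \<le> norm (transpose An *v w)" for w
  proof -
    have "norm ((transpose An - transpose A) *v w) \<le> No * Nn * e * norm w"
      unfolding No_def Nn_def
    proof (rule matrix_bound)
      fix k j
      show "\<bar>(transpose An - transpose A) $ k $ j\<bar> \<le> e"
        using n1 unfolding An_def transpose_def by (simp add: less_imp_le)
    qed
    also have "No * Nn * e = s / 2" unfolding e_def using Nn1 No1 by simp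
    finally have d: "norm ((transpose An - transpose A) *v w) \<le> s / 2 * norm w" .
    have "transpose A *v w = transpose An *v w - (transpose An - transpose A) *v w"
      by (simp add: matrix_vector_mult_diff_rdistrib)
    hence "norm (transpose A *v w) \<le> norm (transpose An *v w) + norm ((transpose An - transpose A) *v w)"
      using norm_triangle_ineq4[of "transpose An *v w" "(transpose An - transpose A) *v w"] by simp
    thus ?thesis using s(2)[of w] d by linarith
  qed
  have s2: "s / 2 > 0" using s by simp
  have injn: "inj ((*v) (transpose An))" by (rule pinv_norm(1)[OF s2 low])
  hence rkn: "\<not> rank An < CARD('n)" using rank_less_iff[of An] by simp
  have "opnorm p (pinv An) \<le> Bd"
  proof (rule opnorm_le[OF p])
    fix u :: "real^'n"
    have "pnorm p (pinv An *v u) \<le> No * norm (pinv An *v u)" unfolding No_def by (rule pnorm_le_norm[OF p])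
    also have "\<dots> \<le> No * (norm u / (s / 2))" using pinv_norm(2)[OF s2 low, of u] No1 by (intro mult_left_mono) auto
    also have "\<dots> \<le> No * ((Nn * pnorm p u) / (s / 2))"
      using norm_le_pnorm[OF p, of u] s2 No1 unfolding Nn_def by (intro mult_left_mono divide_right_mono) auto
    also have "\<dots> = Bd * pnorm p u" unfolding Bd_def using s by (simp add: field_simps)
    finally show "pnorm p (pinv An *v u) \<le> Bd * pnorm p u" .
  qed
  moreover have "real (Suc (r n)) < opnorm p (pinv An)" using F2[of "r n"] rkn unfolding An_def by simp
  ultimately show False using n2 by linarith
qed

lemma bnorm_pos:
  fixes m :: "'n::finite option \<Rightarrow> nat" and b :: "('n option \<Rightarrow> nat) \<Rightarrow> real^'n"
  assumes p: "p \<ge> 1" and nd: "\<not> degenerate m b"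
  shows "bb_norm p m b > 0"
proof (rule ccontr)
  assume "\<not> bb_norm p m b > 0"
  hence z: "bb_norm p m b \<le> 0" by simp
  have b0: "b i = 0" if "i \<in> multi_idx m" for i
  proof (rule ccontr)
    assume "b i \<noteq> 0"
    hence "pnorm p (b i) > 0" by (rule pnorm_pos[OF p])
    thus False using bb_norm_ge[OF that, of p b] z by simp
  qed
  have "bb_eval m b 0 = 0" unfolding bb_eval_def using b0 by simp
  moreover have "bb_jac m b 0 = 0" using b0 by (simp add: vec_eq_iff bb_jac_formula)
  ultimately have "degenerate m b" unfolding degenerate_def using zero_cube by force
  thus False using nd by simp
qed

theorem theorem2:
  fixes m :: "'n::finite option \<Rightarrow> nat" and p :: ereal
  assumes "\<forall>j. m j \<ge> 1" and "p \<ge> 1"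
  shows "\<exists>c c'. c > 0 \<and> c' > 0 \<and>
    (\<forall>b :: ('n option \<Rightarrow> nat) \<Rightarrow> real^'n. \<not> degenerate m b \<longrightarrow>
       (\<forall>b'. ereal (bb_norm p m (\<lambda>i. b' i - b i) / bb_norm p m b) \<le> ereal c / kappa p m b
               \<longrightarrow> \<not> degenerate m b') \<and>
       (\<exists>b'. degenerate m b' \<and>
               ereal (bb_norm p m (\<lambda>i. b' i - b i) / bb_norm p m b) \<le> ereal c' / kappa p m b))"
proof -
  note m = assms(1) and p = assms(2)
  define K where "K = K1 m"
  have Kpos: "K > 0" unfolding K_def K1_def using CB_nonneg[of m] CD_nonneg[of m] by (simp add: add_nonneg_pos)
  define C2 where "C2 = 3 * real CARD('n option) ^ 4"
  have C2pos: "C2 > 0" unfolding C2_def by simp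
  define c where "c = 1 / (2 * K)"
  define c' where "c' = 2 * C2"
  have "c > 0" "c' > 0" unfolding c_def c'_def using Kpos C2pos by auto
  moreover have "(\<forall>b'. ereal (bb_norm p m (\<lambda>i. b' i - b i) / bb_norm p m b) \<le> ereal c / kappa p m b
               \<longrightarrow> \<not> degenerate m b') \<and>
       (\<exists>b'. degenerate m b' \<and>
               ereal (bb_norm p m (\<lambda>i. b' i - b i) / bb_norm p m b) \<le> ereal c' / kappa p m b)"
    if nd: "\<not> degenerate m b" for b :: "('n option \<Rightarrow> nat) \<Rightarrow> real^'n"
  proof
    define V where "V = (SUP x\<in>unit_cube. val p m b x)"
    define nb where "nb = bb_norm p m b"
    have nbpos: "nb > 0" unfolding nb_def by (rule bnorm_pos[OF p nd])
    have kap: "kappa p m b = ereal nb * V" unfolding kappa_val V_def nb_def ..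
    have Vfin: "V < \<infinity>" unfolding V_def by (rule sup_finite[OF p nd])
    have V0: "val p m b 0 \<le> V" unfolding V_def using zero_cube by (rule SUP_upper)
    have Vpos: "V > 0" using val_pos[OF p nd zero_cube] V0 by simp
    obtain Vr where Vr: "V = ereal Vr" using Vfin Vpos by (cases V) auto
    have Vrpos: "Vr > 0" using Vpos Vr by simp
    have kapr: "kappa p m b = ereal (nb * Vr)" using kap Vr by simp
    have nbVr: "nb * Vr > 0" using nbpos Vrpos by simp
    show "\<forall>b'. ereal (bb_norm p m (\<lambda>i. b' i - b i) / bb_norm p m b) \<le> ereal c / kappa p m b
               \<longrightarrow> \<not> degenerate m b'"
    proof (intro allI impI notI)
      fix b' assume le: "ereal (bb_norm p m (\<lambda>i. b' i - b i) / bb_norm p m b) \<le> ereal c / kappa p m b"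
        and dg: "degenerate m b'"
      define D where "D = bb_norm p m (\<lambda>i. b' i - b i)"
      obtain x where x: "x \<in> unit_cube" "bb_eval m b' x = 0" "rank (bb_jac m b' x) < CARD('n)"
        using dg unfolding degenerate_def by blast
      have pv: "D > 0 \<and> ereal (1 / (K * D)) \<le> val p m b x"
        using part1_val[OF p nd x] unfolding D_def K_def by blast
      have "val p m b x \<le> V" unfolding V_def using x(1) by (rule SUP_upper)
      hence "1 / (K * D) \<le> Vr" using pv Vr by (metis ereal_less_eq(3) order.trans)
      hence "1 \<le> K * D * Vr" using Kpos pv by (simp add: divide_le_eq mult.commute mult.left_commute)
      moreover have "D / nb \<le> c / (nb * Vr)"
        using le nbpos Vrpos unfolding kapr D_def[symmetric] nb_def[symmetric] by simp
      hence "D * Vr \<le> c" using nbpos Vrpos by (simp add: field_simps)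
      hence "K * (D * Vr) \<le> K * c" using Kpos by simp
      hence "K * D * Vr \<le> 1 / 2" unfolding c_def using Kpos by (simp add: mult.assoc)
      ultimately show False by simp
    qed
    show "\<exists>b'. degenerate m b' \<and>
               ereal (bb_norm p m (\<lambda>i. b' i - b i) / bb_norm p m b) \<le> ereal c' / kappa p m b"
    proof -
      have "ereal (Vr / 2) < V" using Vr Vrpos by simp
      then obtain x where x: "x \<in> unit_cube" and vx: "ereal (Vr / 2) < val p m b x"
        unfolding V_def by (auto simp: less_SUP_iff)
      have "val p m b x \<le> V" unfolding V_def using x by (rule SUP_upper)
      hence "val p m b x < \<infinity>" using Vfin by (rule le_less_trans)
      then obtain v where v: "val p m b x = ereal v" using vx by (cases "val p m b x") auto
      have vVr: "Vr / 2 < v" using vx v by simp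
      have vpos: "v > 0" using vVr Vrpos by simp
      obtain b' where b': "degenerate m b'" "bb_norm p m (\<lambda>i. b' i - b i) \<le> C2 / v"
        using part2_bound[OF m p nd x v] unfolding C2_def by blast
      have "C2 / v \<le> C2 / (Vr / 2)" using vVr Vrpos C2pos by (intro divide_left_mono) auto
      also have "\<dots> = c' / Vr" unfolding c'_def by simp
      finally have "bb_norm p m (\<lambda>i. b' i - b i) \<le> c' / Vr" using b'(2) by linarith
      hence "bb_norm p m (\<lambda>i. b' i - b i) / nb \<le> c' / Vr / nb" using nbpos divide_right_mono[of _ "c' / Vr" nb] by simp
      hence "bb_norm p m (\<lambda>i. b' i - b i) / nb \<le> c' / (nb * Vr)" by (simp add: mult.commute)
      hence "ereal (bb_norm p m (\<lambda>i. b' i - b i) / bb_norm p m b) \<le> ereal c' / kappa p m b"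
        unfolding kapr nb_def[symmetric] using nbpos Vrpos by simp
      thus ?thesis using b'(1) by blast
    qed
  qed
  ultimately show ?thesis by blast
qed

end
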